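(* Consider a finite MDP $(\mathcal{S},\mathcal{A},P,r)$ with $r:\mathcal{S}\times\mathcal{A}\to[0,1]$ and discount factor $\gamma\in[0,1)$. Let $U,U'\in\mathbb{R}^{\mathcal{S}}$ satisfy $U\ge U'\ge V^*$ and, for all $s\in\mathcal{S}$ and $a\in\mathcal{A}$, $U(s)\ge r(s,a)+\gamma P_{s,a}U$ and $U'(s)\ge r(s,a)+\gamma P_{s,a}U'$. Let $\theta=\|U-V^*\|_\infty$. Then for every stationary policy $\pi$ and every $\tilde s\in\mathcal{S}$, \[ \sum_{s,a}\tilde d_\gamma^{\pi}(s,a\mid\tilde s)\,\mathbb{V}(P_{s,a},U-U')\ \le\ 4\theta^2+2\theta\big(V^*(\tilde s)-V^{\pi}(\tilde s)\big). \]
   Context: $P_{s,a}\in\Delta^{\mathcal{S}}$ is the transition distribution from $(s,a)$ and $P_{s,a}V=\sum_{s'}P(s'|s,a)V(s')$. For $p\in\Delta^{\mathcal{S}}$ and $x\in\mathbb{R}^{\mathcal{S}}$, $\mathbb{V}(p,x)=\sum_{s}p(s)x(s)^2-(\sum_s p(s)x(s))^2$. $V^*$ is the optimal $\gamma$-discounted value function, $V^{\pi}(\tilde s)=\mathbb{E}_\pi[\sum_{t\ge1}\gamma^{t-1}r(s_t,a_t)\mid s_1=\tilde s]$, and $\tilde d_\gamma^{\pi}(s,a\mid\tilde s)=\mathbb{E}_\pi\big[\sum_{t=1}^\infty\gamma^{t-1}\mathbb{I}[(s_t,a_t)=(s,a)]\mid s_1=\tilde s\big]$ with $a_t\sim\pi(\cdot|s_t)$,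 $s_{t+1}\sim P_{s_t,a_t}$. *)

theory Defs
  imports Complex_Main
begin

text \<open>Transition kernel P s a s' = P(s' | s, a), reward r s a, discount g.
  A stationary (possibly randomized) policy is \<pi> s a = \<pi>(a | s).\<close>

definition is_distr :: "('x::finite \<Rightarrow> real) \<Rightarrow> bool" where
  "is_distr p \<longleftrightarrow> (\<forall>x. 0 \<le> p x) \<and> (\<Sum>x\<in>UNIV. p x) = 1"

definition finite_mdp ::
  "('s::finite \<Rightarrow> 'a::finite \<Rightarrow> 's \<Rightarrow> real) \<Rightarrow> ('s \<Rightarrow> 'a \<Rightarrow> real) \<Rightarrow> real \<Rightarrow> bool" where
  "finite_mdp P r g \<longleftrightarrow> (\<forall>s a. is_distr (P s a)) \<and> (\<forall>s a. 0 \<le> r s a \<and> r s a \<le> 1)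
     \<and> 0 \<le> g \<and> g < 1"

definition stationary_policy :: "('s::finite \<Rightarrow> 'a::finite \<Rightarrow> real) \<Rightarrow> bool" where
  "stationary_policy \<pi> \<longleftrightarrow> (\<forall>s. is_distr (\<pi> s))"

definition PV :: "('s::finite \<Rightarrow> 'a \<Rightarrow> 's \<Rightarrow> real) \<Rightarrow> 's \<Rightarrow> 'a \<Rightarrow> ('s \<Rightarrow> real) \<Rightarrow> real" where
  "PV P s a V = (\<Sum>s'\<in>UNIV. P s a s' * V s')"

definition Var :: "('s::finite \<Rightarrow> real) \<Rightarrow> ('s \<Rightarrow> real) \<Rightarrow> real" where
  "Var p x = (\<Sum>s\<in>UNIV. p s * (x s)^2) - (\<Sum>s\<in>UNIV. p s * x s)^2"

text \<open>state_dist P \<pi> s0 n s = Pr_pi[s_{n+1} = s | s_1 = s0]\<close>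
fun state_dist :: "('s::finite \<Rightarrow> 'a::finite \<Rightarrow> 's \<Rightarrow> real) \<Rightarrow> ('s \<Rightarrow> 'a \<Rightarrow> real) \<Rightarrow> 's \<Rightarrow> nat \<Rightarrow> 's \<Rightarrow> real" where
  "state_dist P \<pi> s0 0 s = (if s = s0 then 1 else 0)"
| "state_dist P \<pi> s0 (Suc n) s' =
     (\<Sum>s\<in>UNIV. \<Sum>a\<in>UNIV. state_dist P \<pi> s0 n s * \<pi> s a * P s a s')"

definition occ :: "('s::finite \<Rightarrow> 'a::finite \<Rightarrow> 's \<Rightarrow> real) \<Rightarrow> real \<Rightarrow> ('s \<Rightarrow> 'a \<Rightarrow> real) \<Rightarrow> 's \<Rightarrow> 's \<Rightarrow> 'a \<Rightarrow> real" where
  "occ P g \<pi> s0 s a = (\<Sum>n. g ^ n * (state_dist P \<pi> s0 n s * \<pi> s a))"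

definition Vpi :: "('s::finite \<Rightarrow> 'a::finite \<Rightarrow> 's \<Rightarrow> real) \<Rightarrow> ('s \<Rightarrow> 'a \<Rightarrow> real) \<Rightarrow> real \<Rightarrow> ('s \<Rightarrow> 'a \<Rightarrow> real) \<Rightarrow> 's \<Rightarrow> real" where
  "Vpi P r g \<pi> s0 = (\<Sum>n. g ^ n * (\<Sum>s\<in>UNIV. \<Sum>a\<in>UNIV. state_dist P \<pi> s0 n s * \<pi> s a * r s a))"

text \<open>Optimal value function (supremum over stationary policies; for finite MDPs this
  coincides with the supremum over all history-dependent policies)\<close>
definition Vstar :: "('s::finite \<Rightarrow> 'a::finite \<Rightarrow> 's \<Rightarrow> real) \<Rightarrow> ('s \<Rightarrow> 'a \<Rightarrow> real) \<Rightarrow> real \<Rightarrow> 's \<Rightarrow> real" where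
  "Vstar P r g s0 = (SUP \<pi>\<in>{\<pi>. stationary_policy \<pi>}. Vpi P r g \<pi> s0)"

end

theory Submission
  imports Defs
begin

lemma geom_summ:
  fixes g :: real
  assumes "0 \<le> g" "g < 1" "\<And>n. \<bar>X n\<bar> \<le> K"
  shows "summable (\<lambda>n. g^n * X n)"
proof (rule summable_comparison_test'[where g="\<lambda>n. K * g^n" and N=0])
  show "summable (\<lambda>n. K * g^n)"
    using assms by (intro summable_mult summable_geometric) auto
  fix n :: nat
  have "\<bar>g^n * X n\<bar> = g^n * \<bar>X n\<bar>" using assms by (simp add: abs_mult)
  also have "\<dots> \<le> g^n * K" using assms by (intro mult_left_mono) auto
  finally show "norm (g^n * X n) \<le> K * g^n" by (simp add: mult.commute)
qed

lemma swap3: "(\<Sum>x\<in>A. \<Sum>y\<in>B. \<Sum>z\<in>C. f x y z) = (\<Sum>y\<in>B. \<Sum>z\<in>C. \<Sum>x\<in>A. (f x y z::real))"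
proof -
  have "(\<Sum>x\<in>A. \<Sum>y\<in>B. \<Sum>z\<in>C. f x y z) = (\<Sum>y\<in>B. \<Sum>x\<in>A. \<Sum>z\<in>C. f x y z)"
    by (rule sum.swap)
  also have "\<dots> = (\<Sum>y\<in>B. \<Sum>z\<in>C. \<Sum>x\<in>A. f x y z)"
    by (rule sum.cong[OF refl], rule sum.swap)
  finally show ?thesis .
qed

lemma sd_props:
  assumes mdp: "finite_mdp P r g" and pol: "stationary_policy \<pi>"
  shows "(\<forall>s. 0 \<le> state_dist P \<pi> s0 n s) \<and> (\<Sum>s\<in>UNIV. state_dist P \<pi> s0 n s) = 1"
proof (induction n)
  case 0
  then show ?case by (simp add: sum.delta)
next
  case (Suc n)
  have Pd: "\<And>s a. is_distr (P s a)" using mdp by (simp add: finite_mdp_def)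
  have pd: "\<And>s. is_distr (\<pi> s)" using pol by (simp add: stationary_policy_def)
  have nn: "\<forall>s. 0 \<le> state_dist P \<pi> s0 (Suc n) s"
    using Suc Pd pd by (auto simp: is_distr_def intro!: sum_nonneg mult_nonneg_nonneg)
  have "(\<Sum>s'\<in>UNIV. state_dist P \<pi> s0 (Suc n) s') =
      (\<Sum>s\<in>UNIV. \<Sum>a\<in>UNIV. state_dist P \<pi> s0 n s * \<pi> s a * (\<Sum>s'\<in>UNIV. P s a s'))"
    by (simp only: state_dist.simps swap3[of "\<lambda>s' s a. state_dist P \<pi> s0 n s * \<pi> s a * P s a s'"] sum_distrib_left)
  also have "\<dots> = (\<Sum>s\<in>UNIV. state_dist P \<pi> s0 n s * (\<Sum>a\<in>UNIV. \<pi> s a))"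
    using Pd by (simp add: is_distr_def sum_distrib_left)
  also have "\<dots> = 1" using pd Suc by (simp add: is_distr_def)
  finally show ?case using nn by simp
qed

lemma L1:
  assumes pol: "stationary_policy \<pi>"
  shows "(\<Sum>s\<in>UNIV. \<Sum>a\<in>UNIV. d s * \<pi> s a * f s) = (\<Sum>s\<in>UNIV. d s * (f s::real))"
proof -
  have pd: "\<And>s. (\<Sum>a\<in>UNIV. \<pi> s a) = 1" using pol by (simp add: stationary_policy_def is_distr_def)
  have "(\<Sum>s\<in>UNIV. \<Sum>a\<in>UNIV. d s * \<pi> s a * f s) = (\<Sum>s\<in>UNIV. d s * f s * (\<Sum>a\<in>UNIV. \<pi> s a))"
    by (simp add: sum_distrib_left mult_ac)
  then show ?thesis using pd by simp
qed

lemma L2: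
  "(\<Sum>s\<in>UNIV. \<Sum>a\<in>UNIV. state_dist P \<pi> s0 n s * \<pi> s a * PV P s a f)
    = (\<Sum>s\<in>UNIV. state_dist P \<pi> s0 (Suc n) s * f s)"
proof -
  have "(\<Sum>s\<in>UNIV. \<Sum>a\<in>UNIV. state_dist P \<pi> s0 n s * \<pi> s a * PV P s a f)
     = (\<Sum>s\<in>UNIV. \<Sum>a\<in>UNIV. \<Sum>s'\<in>UNIV. state_dist P \<pi> s0 n s * \<pi> s a * P s a s' * f s')"
    by (simp add: PV_def sum_distrib_left mult_ac)
  also have "\<dots> = (\<Sum>s'\<in>UNIV. \<Sum>s\<in>UNIV. \<Sum>a\<in>UNIV. state_dist P \<pi> s0 n s * \<pi> s a * P s a s' * f s')"
    by (rule swap3[symmetric])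
  also have "\<dots> = (\<Sum>s\<in>UNIV. state_dist P \<pi> s0 (Suc n) s * f s)"
    by (simp add: sum_distrib_right)
  finally show ?thesis .
qed

lemma pointwise:
  fixes P :: "'s::finite \<Rightarrow> 'a::finite \<Rightarrow> 's \<Rightarrow> real"
  assumes Pd: "is_distr (P s a)" and g: "0 \<le> g" "g \<le> 1"
    and D0: "\<And>x. 0 \<le> U x - U' x" and Dt: "\<And>x. U x - U' x \<le> \<theta>"
    and Ub: "U s \<ge> r s a + g * PV P s a U"
    and U'b: "U' s \<ge> r s a + g * PV P s a U'"
  shows "Var (P s a) (\<lambda>x. U x - U' x) \<le>
     (PV P s a (\<lambda>x. (U x - U' x)^2) - (U s - U' s)^2) + 2 * \<theta> * (U s - r s a - g * PV P s a U)"
proof -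
  define D where "D = (\<lambda>x. U x - U' x)"
  define m where "m = PV P s a D"
  have th0: "0 \<le> \<theta>" using D0 Dt by (meson order.trans)
  have m0: "0 \<le> m" unfolding m_def PV_def using Pd D0 D_def
    by (auto simp: is_distr_def intro!: sum_nonneg)
  have "m \<le> (\<Sum>s'\<in>UNIV. P s a s' * \<theta>)" unfolding m_def PV_def using Pd Dt D_def
    by (auto simp: is_distr_def intro!: sum_mono mult_left_mono)
  then have mt: "m \<le> \<theta>" using Pd by (simp add: is_distr_def sum_distrib_right[symmetric])
  have lin: "m = PV P s a U - PV P s a U'" unfolding m_def PV_def D_def
    by (simp add: right_diff_distrib sum_subtractf)
  have var: "Var (P s a) D = PV P s a (\<lambda>x. (D x)^2) - m^2"
    unfolding Var_def PV_def m_def by simp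
  have key: "(D s)^2 - m^2 \<le> 2 * \<theta> * (U s - r s a - g * PV P s a U)"
  proof (cases "D s \<le> m")
    case True
    then have "(D s)^2 - m^2 \<le> 0" using D0 D_def by (simp add: power_mono)
    moreover have "0 \<le> 2 * \<theta> * (U s - r s a - g * PV P s a U)" using th0 Ub by simp
    ultimately show ?thesis by linarith
  next
    case False
    have "g * m \<le> m" using g m0 by (simp add: mult_left_le_one_le)
    then have "D s - m \<le> D s - g * m" by simp
    also have "\<dots> \<le> U s - r s a - g * PV P s a U"
      using U'b lin D_def by (simp add: right_diff_distrib)
    finally have A: "D s - m \<le> U s - r s a - g * PV P s a U" .
    have "(D s)^2 - m^2 = (D s - m) * (D s + m)" by (simp add: power2_eq_square algebra_simps)
    also have "\<dots> \<le> (D s - m) * (2 * \<theta>)"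
      using False mt Dt[of s] D_def by (intro mult_left_mono) auto
    also have "\<dots> \<le> (U s - r s a - g * PV P s a U) * (2 * \<theta>)"
      using A th0 by (intro mult_right_mono) auto
    finally show ?thesis by (simp add: mult_ac)
  qed
  show ?thesis using var key unfolding D_def by simp
qed


lemma abs_bound2:
  fixes w X :: "'s::finite \<Rightarrow> 'a::finite \<Rightarrow> real"
  assumes "\<And>s a. 0 \<le> w s a" "\<And>s a. w s a \<le> 1"
  shows "\<bar>\<Sum>s\<in>UNIV. \<Sum>a\<in>UNIV. w s a * X s a\<bar> \<le> (\<Sum>s\<in>UNIV. \<Sum>a\<in>UNIV. \<bar>X s a\<bar>)"
proof -
  have "\<bar>\<Sum>s\<in>UNIV. \<Sum>a\<in>UNIV. w s a * X s a\<bar> \<le> (\<Sum>s\<in>UNIV. \<Sum>a\<in>UNIV. \<bar>w s a * X s a\<bar>)"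
    by (rule order.trans[OF sum_abs]) (intro sum_mono sum_abs)
  also have "\<dots> \<le> (\<Sum>s\<in>UNIV. \<Sum>a\<in>UNIV. \<bar>X s a\<bar>)"
    using assms by (intro sum_mono) (simp add: abs_mult mult_left_le_one_le)
  finally show ?thesis .
qed

lemma abs_bound1:
  fixes w X :: "'s::finite \<Rightarrow> real"
  assumes "\<And>s. 0 \<le> w s" "\<And>s. w s \<le> 1"
  shows "\<bar>\<Sum>s\<in>UNIV. w s * X s\<bar> \<le> (\<Sum>s\<in>UNIV. \<bar>X s\<bar>)"
proof -
  have "\<bar>\<Sum>s\<in>UNIV. w s * X s\<bar> \<le> (\<Sum>s\<in>UNIV. \<bar>w s * X s\<bar>)" by (rule sum_abs)
  also have "\<dots> \<le> (\<Sum>s\<in>UNIV. \<bar>X s\<bar>)"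
    using assms by (intro sum_mono) (simp add: abs_mult mult_left_le_one_le)
  finally show ?thesis .
qed

lemma lin_eq:
  fixes w a1 a2 a3 a4 a5 :: "'s::finite \<Rightarrow> 'a::finite \<Rightarrow> real"
  shows "(\<Sum>s\<in>UNIV. \<Sum>a\<in>UNIV. w s a * (a1 s a - a2 s a + c * (a3 s a - a4 s a - g * a5 s a)))
   = (\<Sum>s\<in>UNIV. \<Sum>a\<in>UNIV. w s a * a1 s a) - (\<Sum>s\<in>UNIV. \<Sum>a\<in>UNIV. w s a * a2 s a)
     + c * ((\<Sum>s\<in>UNIV. \<Sum>a\<in>UNIV. w s a * a3 s a) - (\<Sum>s\<in>UNIV. \<Sum>a\<in>UNIV. w s a * a4 s a)
     - g * (\<Sum>s\<in>UNIV. \<Sum>a\<in>UNIV. w s a * a5 s a))"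
  by (simp add: sum.distrib sum_subtractf sum_distrib_left algebra_simps)

theorem mainTheorem6:
  fixes P :: "'s::finite \<Rightarrow> 'a::finite \<Rightarrow> 's \<Rightarrow> real"
    and r :: "'s \<Rightarrow> 'a \<Rightarrow> real" and g :: real
    and U U' :: "'s \<Rightarrow> real" and \<pi> :: "'s \<Rightarrow> 'a \<Rightarrow> real" and s0 :: 's and \<theta> :: real
  assumes mdp: "finite_mdp P r g"
    and UU': "\<forall>s. U s \<ge> U' s"
    and U'V: "\<forall>s. U' s \<ge> Vstar P r g s"
    and U_bell: "\<forall>s a. U s \<ge> r s a + g * PV P s a U"
    and U'_bell: "\<forall>s a. U' s \<ge> r s a + g * PV P s a U'"
    and theta: "\<theta> = Max (range (\<lambda>s. \<bar>U s - Vstar P r g s\<bar>))"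
    and policy: "stationary_policy \<pi>"
  shows "(\<Sum>s\<in>UNIV. \<Sum>a\<in>UNIV. occ P g \<pi> s0 s a * Var (P s a) (\<lambda>x. U x - U' x))
           \<le> 4 * \<theta>^2 + 2 * \<theta> * (Vstar P r g s0 - Vpi P r g \<pi> s0)"
proof -
  have Pd: "\<And>s a. is_distr (P s a)" using mdp by (simp add: finite_mdp_def)
  have g0: "0 \<le> g" and g1: "g < 1" using mdp by (auto simp: finite_mdp_def)
  have pd: "\<And>s. is_distr (\<pi> s)" using policy by (simp add: stationary_policy_def)
  have p0: "\<And>s a. 0 \<le> \<pi> s a" using pd by (simp add: is_distr_def)
  have p1: "\<And>s a. \<pi> s a \<le> 1"
  proof -
    fix s a
    have "\<pi> s a \<le> (\<Sum>a\<in>UNIV. \<pi> s a)" by (rule member_le_sum) (use p0 in auto)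
    then show "\<pi> s a \<le> 1" using pd by (simp add: is_distr_def)
  qed
  let ?sd = "state_dist P \<pi> s0"
  have d0: "\<And>n s. 0 \<le> ?sd n s" using sd_props[OF mdp policy] by blast
  have d1: "\<And>n s. ?sd n s \<le> 1"
  proof -
    fix n s
    have "?sd n s \<le> (\<Sum>s\<in>UNIV. ?sd n s)" by (rule member_le_sum) (use d0 in auto)
    then show "?sd n s \<le> 1" using sd_props[OF mdp policy] by simp
  qed
  have dp0: "\<And>n s a. 0 \<le> ?sd n s * \<pi> s a" using d0 p0 by simp
  have dp1: "\<And>n s a. ?sd n s * \<pi> s a \<le> 1" using d0 d1 p0 p1 by (simp add: mult_le_one)
  have D0: "\<And>x. 0 \<le> U x - U' x" using UU' by simp
  have Ut: "\<And>x. U x - Vstar P r g x \<le> \<theta>"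
  proof -
    fix x
    have "\<bar>U x - Vstar P r g x\<bar> \<le> \<theta>" unfolding theta by (rule Max_ge) auto
    then show "U x - Vstar P r g x \<le> \<theta>" by simp
  qed
  have Dt: "\<And>x. U x - U' x \<le> \<theta>" using Ut U'V by (smt (verit))
  have th0: "0 \<le> \<theta>" using D0 Dt by (meson order.trans)
  define A where "A n = (\<Sum>s\<in>UNIV. ?sd n s * (U s - U' s)^2)" for n
  define C where "C n = (\<Sum>s\<in>UNIV. ?sd n s * U s)" for n
  define R where "R n = (\<Sum>s\<in>UNIV. \<Sum>a\<in>UNIV. ?sd n s * \<pi> s a * r s a)" for n
  define B where "B n = (\<Sum>s\<in>UNIV. \<Sum>a\<in>UNIV. ?sd n s * \<pi> s a * Var (P s a) (\<lambda>x. U x - U' x))" for n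
  have A0: "\<And>n. 0 \<le> A n" unfolding A_def using d0 by (intro sum_nonneg) simp
  have At: "\<And>n. A n \<le> \<theta>^2"
  proof -
    fix n
    have "A n \<le> (\<Sum>s\<in>UNIV. ?sd n s * \<theta>^2)" unfolding A_def
      using d0 D0 Dt by (intro sum_mono mult_left_mono power_mono) auto
    then show "A n \<le> \<theta>^2" using sd_props[OF mdp policy] by (simp add: sum_distrib_right[symmetric])
  qed
  have sA: "summable (\<lambda>n. g^n * A n)"
    by (rule geom_summ[OF g0 g1, where K="\<theta>^2"]) (use A0 At in auto)
  have sC: "summable (\<lambda>n. g^n * C n)"
    by (rule geom_summ[OF g0 g1, where K="\<Sum>s\<in>UNIV. \<bar>U s\<bar>"])
       (unfold C_def, rule abs_bound1, use d0 d1 in auto)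
  have sR: "summable (\<lambda>n. g^n * R n)"
    unfolding R_def
    by (rule geom_summ[OF g0 g1, where K="\<Sum>s\<in>UNIV. \<Sum>a\<in>UNIV. \<bar>r s a\<bar>"])
       (use abs_bound2[of "\<lambda>s a. ?sd _ s * \<pi> s a" r] dp0 dp1 in auto)
  have sB: "summable (\<lambda>n. g^n * B n)"
    unfolding B_def
    by (rule geom_summ[OF g0 g1, where K="\<Sum>s\<in>UNIV. \<Sum>a\<in>UNIV. \<bar>Var (P s a) (\<lambda>x. U x - U' x)\<bar>"])
       (rule abs_bound2, use dp0 dp1 in auto)
  have pw: "Var (P s a) (\<lambda>x. U x - U' x) \<le>
     (PV P s a (\<lambda>x. (U x - U' x)^2) - (U s - U' s)^2) + 2 * \<theta> * (U s - r s a - g * PV P s a U)" for s a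
    by (rule pointwise[of P s a g U U' \<theta> r, OF Pd g0 less_imp_le[OF g1] D0 Dt]) (use U_bell U'_bell in auto)
  have stepB: "B n \<le> (A (Suc n) - A n) + 2 * \<theta> * (C n - g * C (Suc n) - R n)" for n
  proof -
    have "B n \<le> (\<Sum>s\<in>UNIV. \<Sum>a\<in>UNIV. ?sd n s * \<pi> s a *
        ((PV P s a (\<lambda>x. (U x - U' x)^2)) - (U s - U' s)^2
         + 2 * \<theta> * (U s - r s a - g * PV P s a U)))"
      unfolding B_def
      using pw dp0
      by (intro sum_mono mult_left_mono) auto
    also have "\<dots> = (\<Sum>s\<in>UNIV. \<Sum>a\<in>UNIV. ?sd n s * \<pi> s a * PV P s a (\<lambda>x. (U x - U' x)^2))
        - (\<Sum>s\<in>UNIV. \<Sum>a\<in>UNIV. ?sd n s * \<pi> s a * (U s - U' s)^2)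
        + 2 * \<theta> * ((\<Sum>s\<in>UNIV. \<Sum>a\<in>UNIV. ?sd n s * \<pi> s a * U s)
           - (\<Sum>s\<in>UNIV. \<Sum>a\<in>UNIV. ?sd n s * \<pi> s a * r s a)
           - g * (\<Sum>s\<in>UNIV. \<Sum>a\<in>UNIV. ?sd n s * \<pi> s a * PV P s a U))"
      by (rule lin_eq)
    also have "\<dots> = (A (Suc n) - A n) + 2 * \<theta> * (C n - g * C (Suc n) - R n)"
      unfolding A_def C_def R_def L2 L1[OF policy] by simp
    finally show ?thesis .
  qed
  define T where "T n = (1-g) * \<theta>^2 * g^n + (g^Suc n * A (Suc n) - g^n * A n)
     + 2 * \<theta> * (g^n * C n - g^Suc n * C (Suc n)) - 2 * \<theta> * (g^n * R n)" for n
  have leT: "g^n * B n \<le> T n" for n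
  proof -
    have h1: "g^n * B n \<le> g^n * ((A (Suc n) - A n) + 2 * \<theta> * (C n - g * C (Suc n) - R n))"
      using stepB g0 by (intro mult_left_mono) auto
    have h2: "(1-g) * g^n * A (Suc n) \<le> (1-g) * g^n * \<theta>^2"
      using At g0 g1 by (intro mult_left_mono) auto
    have h3: "g^n * ((A (Suc n) - A n) + 2 * \<theta> * (C n - g * C (Suc n) - R n))
       = (1-g) * g^n * A (Suc n) + (g^Suc n * A (Suc n) - g^n * A n)
         + 2 * \<theta> * (g^n * C n - g^Suc n * C (Suc n)) - 2 * \<theta> * (g^n * R n)"
      by (simp add: algebra_simps)
    show ?thesis using h1 h2 h3 unfolding T_def by (simp add: mult_ac)
  qed
  have t1: "(\<lambda>n. (1-g) * \<theta>^2 * g^n) sums ((1-g) * \<theta>^2 * (1 / (1 - g)))"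
    using g0 g1 by (intro sums_mult geometric_sums) auto
  have t2: "(\<lambda>n. g^Suc n * A (Suc n) - g^n * A n) sums (0 - g^0 * A 0)"
    using telescope_sums[OF summable_LIMSEQ_zero[OF sA]] by simp
  have t3: "(\<lambda>n. g^n * C n - g^Suc n * C (Suc n)) sums (g^0 * C 0 - 0)"
    using telescope_sums'[OF summable_LIMSEQ_zero[OF sC]] by simp
  have t4: "(\<lambda>n. g^n * R n) sums Vpi P r g \<pi> s0"
    unfolding Vpi_def R_def[symmetric] by (rule summable_sums[OF sR])
  have tT: "T sums ((1-g) * \<theta>^2 * (1 / (1 - g)) + (0 - g^0 * A 0)
      + 2 * \<theta> * (g^0 * C 0 - 0) - 2 * \<theta> * Vpi P r g \<pi> s0)"
    unfolding T_def by (intro sums_diff sums_add sums_mult t1 t2 t3 t4)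
  have sOcc: "\<And>s a. summable (\<lambda>n. g^n * (?sd n s * \<pi> s a))"
    by (rule geom_summ[OF g0 g1, where K=1]) (use dp0 dp1 in auto)
  have "(\<Sum>s\<in>UNIV. \<Sum>a\<in>UNIV. occ P g \<pi> s0 s a * Var (P s a) (\<lambda>x. U x - U' x))
      = (\<Sum>s\<in>UNIV. \<Sum>a\<in>UNIV. \<Sum>n. g^n * (?sd n s * \<pi> s a) * Var (P s a) (\<lambda>x. U x - U' x))"
    unfolding occ_def by (simp add: suminf_mult2[OF sOcc])
  also have "\<dots> = (\<Sum>s\<in>UNIV. \<Sum>n. \<Sum>a\<in>UNIV. g^n * (?sd n s * \<pi> s a) * Var (P s a) (\<lambda>x. U x - U' x))"
    by (intro sum.cong refl suminf_sum[symmetric] summable_mult2 sOcc)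
  also have "\<dots> = (\<Sum>n. \<Sum>s\<in>UNIV. \<Sum>a\<in>UNIV. g^n * (?sd n s * \<pi> s a) * Var (P s a) (\<lambda>x. U x - U' x))"
    by (intro suminf_sum[symmetric] summable_sum summable_mult2 sOcc)
  also have "\<dots> = (\<Sum>n. g^n * B n)"
    unfolding B_def by (simp add: sum_distrib_left mult_ac)
  finally have LHS: "(\<lambda>n. g^n * B n) sums (\<Sum>s\<in>UNIV. \<Sum>a\<in>UNIV. occ P g \<pi> s0 s a * Var (P s a) (\<lambda>x. U x - U' x))"
    using summable_sums[OF sB] by simp
  have le: "(\<Sum>s\<in>UNIV. \<Sum>a\<in>UNIV. occ P g \<pi> s0 s a * Var (P s a) (\<lambda>x. U x - U' x))
     \<le> (1-g) * \<theta>^2 * (1 / (1 - g)) + (0 - g^0 * A 0)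
      + 2 * \<theta> * (g^0 * C 0 - 0) - 2 * \<theta> * Vpi P r g \<pi> s0"
    by (rule sums_le[OF leT LHS tT])
  have e1: "(1-g) * \<theta>^2 * (1 / (1 - g)) = \<theta>^2" using g1 by simp
  have C0: "C 0 = U s0" unfolding C_def by (simp add: if_distrib[of "\<lambda>c. c * _"] sum.delta cong: if_cong)
  have "\<theta> * (U s0 - Vstar P r g s0) \<le> \<theta> * \<theta>" using Ut th0 by (intro mult_left_mono) auto
  then have h: "\<theta> * U s0 \<le> \<theta> * \<theta> + \<theta> * Vstar P r g s0" by (simp add: algebra_simps)
  have le2: "(\<Sum>s\<in>UNIV. \<Sum>a\<in>UNIV. occ P g \<pi> s0 s a * Var (P s a) (\<lambda>x. U x - U' x))
     \<le> \<theta> * \<theta> - A 0 + 2 * (\<theta> * U s0) - 2 * (\<theta> * Vpi P r g \<pi> s0)"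
    using le unfolding e1 C0 by (simp add: power2_eq_square)
  have "4 * \<theta>^2 + 2 * \<theta> * (Vstar P r g s0 - Vpi P r g \<pi> s0)
     = 4 * (\<theta> * \<theta>) + 2 * (\<theta> * Vstar P r g s0) - 2 * (\<theta> * Vpi P r g \<pi> s0)"
    by (simp add: algebra_simps power2_eq_square)
  then show ?thesis using le2 h A0[of 0] th0 mult_nonneg_nonneg[OF th0 th0] by linarith
qed

end
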